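(* Let $a,c,p\in\mathbb{C}$ with $-c\notin\mathbb{N}\cup\{0\}$. Define sequences $(u_n)_{n\ge0}$ and $(v_n)_{n\ge0}$ by $u_0=1$, $u_1=\frac{a}{c}+ip$, $v_0=1$, $v_1=\frac{a}{c}-ip$ and, for all integers $n\ge1$, \[ u_{n+1}=\frac{a+ip(c+2n)+n}{(n+1)(c+n)}u_n-\frac{ip-p^2}{(n+1)(c+n)}u_{n-1}, \] \[ v_{n+1}=\frac{a-ip(c+2n)+n}{(n+1)(c+n)}v_n+\frac{ip+p^2}{(n+1)(c+n)}v_{n-1}. \] Then \[ \sin(pz)\,M(a,c;z)=\sum_{n=0}^\infty\frac{u_n-v_n}{2i}z^n,\qquad z\in\mathbb{C}. \]
   Context: Here $i$ is the imaginary unit. For $a\in\mathbb{C}$, $(a)_n=a(a+1)\cdots(a+n-1)$ denotes the Pochhammer symbol, with $(a)_0=1$. For $a,c\in\mathbb{C}$ with $-c\notin\mathbb{N}\cup\{0\}$, the confluent hypergeometric (Kummer) function is $M(a,c;z)=\sum_{n=0}^\infty \frac{(a)_n}{(c)_n\,n!}z^n$, $z\in\mathbb{C}$. *)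

theory Defs
  imports "HOL-Analysis.Analysis"
begin

definition kummerM :: "complex \<Rightarrow> complex \<Rightarrow> complex \<Rightarrow> complex" where
  "kummerM a c z = (\<Sum>n. pochhammer a n / (pochhammer c n * of_nat (fact n)) * z ^ n)"

text \<open>u_0 = 1, u_1 = a/c + ip, and for n \<ge> 1 (here n = m+1) the three-term recurrence.\<close>
fun u_seq :: "complex \<Rightarrow> complex \<Rightarrow> complex \<Rightarrow> nat \<Rightarrow> complex" where
  "u_seq a c p 0 = 1"
| "u_seq a c p (Suc 0) = a / c + \<i> * p"
| "u_seq a c p (Suc (Suc m)) =
     (a + \<i> * p * (c + 2 * of_nat (Suc m)) + of_nat (Suc m))
       / (of_nat (Suc (Suc m)) * (c + of_nat (Suc m))) * u_seq a c p (Suc m)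
     - (\<i> * p - p ^ 2) / (of_nat (Suc (Suc m)) * (c + of_nat (Suc m))) * u_seq a c p m"

fun v_seq :: "complex \<Rightarrow> complex \<Rightarrow> complex \<Rightarrow> nat \<Rightarrow> complex" where
  "v_seq a c p 0 = 1"
| "v_seq a c p (Suc 0) = a / c - \<i> * p"
| "v_seq a c p (Suc (Suc m)) =
     (a - \<i> * p * (c + 2 * of_nat (Suc m)) + of_nat (Suc m))
       / (of_nat (Suc (Suc m)) * (c + of_nat (Suc m))) * v_seq a c p (Suc m)
     + (\<i> * p + p ^ 2) / (of_nat (Suc (Suc m)) * (c + of_nat (Suc m))) * v_seq a c p m"

end

theory Submission
  imports Defs "HOL-Computational_Algebra.Formal_Power_Series"
begin

definition mc :: "complex \<Rightarrow> complex \<Rightarrow> nat \<Rightarrow> complex" where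
  "mc a c n = pochhammer a n / (pochhammer c n * of_nat (fact n))"

lemma poch_nz: assumes "\<forall>k::nat. c \<noteq> - of_nat k" shows "pochhammer c n \<noteq> (0::complex)"
  using assms by (auto simp: pochhammer_eq_0_iff)

lemma cn_nz: assumes "\<forall>k::nat. c \<noteq> - of_nat k" shows "c + of_nat n \<noteq> (0::complex)"
  using assms by (metis add.commute add_eq_0_iff2 minus_minus)

lemma mrec:
  assumes "\<forall>k::nat. c \<noteq> - of_nat k"
  shows "(of_nat n + 1) * (c + of_nat n) * mc a c (Suc n) = (a + of_nat n) * mc a c n"
proof -
  have p: "pochhammer c n \<noteq> 0" by (rule poch_nz[OF assms])
  have q: "c + of_nat n \<noteq> 0" by (rule cn_nz[OF assms])
  have f: "(of_nat (fact n) :: complex) \<noteq> 0" by simp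
  have e: "mc a c (Suc n) = pochhammer a n * (a + of_nat n) /
      (pochhammer c n * (c + of_nat n) * (of_nat (fact n) * (of_nat n + 1)))"
    unfolding mc_def by (simp add: pochhammer_rec' fact_Suc algebra_simps)
  have g: "of_nat n + 1 \<noteq> (0::complex)"
    by (metis of_nat_Suc of_nat_eq_0_iff add.commute nat.distinct(1))
  have gen: "\<And>x y A B C F::complex. x \<noteq> 0 \<Longrightarrow> y \<noteq> 0 \<Longrightarrow> C \<noteq> 0 \<Longrightarrow> F \<noteq> 0 \<Longrightarrow>
     x * y * (A * B / (C * y * (F * x))) = B * (A / (C * F))"
    by (simp add: field_simps)
  show ?thesis unfolding e unfolding mc_def using gen[OF g q p f] by simp
qed

lemma ode:
  fixes a c :: complex
  assumes "\<forall>k::nat. c \<noteq> - of_nat k"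
  defines "M \<equiv> Abs_fps (mc a c)"
  shows "fps_X * fps_deriv (fps_deriv M) + fps_const c * fps_deriv M - fps_X * fps_deriv M
          - fps_const a * M = 0"
proof (rule fps_ext)
  fix n
  show "fps_nth (fps_X * fps_deriv (fps_deriv M) + fps_const c * fps_deriv M - fps_X * fps_deriv M
          - fps_const a * M) n = fps_nth 0 n"
  proof (cases n)
    case 0
    then show ?thesis using mrec[OF assms(1), of 0 a] by (simp add: M_def)
  next
    case (Suc k)
    then show ?thesis using mrec[OF assms(1), of "Suc k" a] by (simp add: M_def algebra_simps)
  qed
qed

lemma ode2:
  fixes a c q :: complex
  assumes "\<forall>k::nat. c \<noteq> - of_nat k"
  defines "F \<equiv> fps_exp q * Abs_fps (mc a c)"
  shows "fps_X * fps_deriv (fps_deriv F) + fps_const c * fps_deriv F - fps_X * fps_deriv F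
     - fps_const (2*q) * (fps_X * fps_deriv F) + fps_const (q^2+q) * (fps_X * F)
     - fps_const (q*c+a) * F = 0"
proof -
  define M where "M = Abs_fps (mc a c)"
  define E where "E = fps_exp q"
  define Q where "Q = fps_const q"
  define C where "C = fps_const c"
  define A where "A = fps_const a"
  have o: "fps_X * fps_deriv (fps_deriv M) + C * fps_deriv M - fps_X * fps_deriv M - A * M = 0"
    using ode[OF assms(1), of a] unfolding M_def C_def A_def .
  have dE: "fps_deriv E = Q * E" unfolding E_def Q_def by simp
  have dQ: "fps_deriv Q = 0" unfolding Q_def by simp
  have d1: "fps_deriv F = Q * E * M + E * fps_deriv M"
    unfolding F_def E_def[symmetric] M_def[symmetric] using dE by (simp add: fps_deriv_mult)
  have d2: "fps_deriv (fps_deriv F) = Q * (Q * E * M + E * fps_deriv M) + Q * E * fps_deriv M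
     + E * fps_deriv (fps_deriv M)"
    unfolding d1 using dE by (simp add: fps_deriv_mult Q_def algebra_simps)
  have cs: "fps_const (2*q) = 2 * Q" "fps_const (q^2+q) = Q^2 + Q" "fps_const (q*c+a) = Q*C + A"
    unfolding Q_def C_def A_def by (simp_all add: fps_const_add fps_const_mult fps_const_power
       numeral_fps_const)
  have "fps_X * fps_deriv (fps_deriv F) + fps_const c * fps_deriv F - fps_X * fps_deriv F
     - fps_const (2*q) * (fps_X * fps_deriv F) + fps_const (q^2+q) * (fps_X * F)
     - fps_const (q*c+a) * F
     = E * (fps_X * fps_deriv (fps_deriv M) + C * fps_deriv M - fps_X * fps_deriv M - A * M)"
    unfolding cs d2 d1 C_def[symmetric] unfolding F_def E_def[symmetric] M_def[symmetric]
    using dQ by (simp add: algebra_simps power2_eq_square dE)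
  then show ?thesis using o by simp
qed


lemma wrec:
  fixes a c q :: complex
  assumes "\<forall>k::nat. c \<noteq> - of_nat k"
  defines "F \<equiv> fps_exp q * Abs_fps (mc a c)"
  shows "(of_nat (Suc (Suc m)) * (c + of_nat (Suc m))) * fps_nth F (Suc (Suc m)) =
     (a + q * (c + 2 * of_nat (Suc m)) + of_nat (Suc m)) * fps_nth F (Suc m) - (q^2+q) * fps_nth F m"
proof -
  have "fps_nth (fps_X * fps_deriv (fps_deriv F) + fps_const c * fps_deriv F - fps_X * fps_deriv F
     - fps_const (2*q) * (fps_X * fps_deriv F) + fps_const (q^2+q) * (fps_X * F)
     - fps_const (q*c+a) * F) (Suc m) = 0"
    using ode2[OF assms(1), of q a] unfolding F_def[symmetric] by simp
  then have "of_nat (Suc m) * (of_nat (Suc (Suc m)) * fps_nth F (Suc (Suc m)))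
     + c * ((of_nat (Suc (Suc m))) * fps_nth F (Suc (Suc m)))
     - of_nat (Suc m) * fps_nth F (Suc m) - 2 * q * (of_nat (Suc m) * fps_nth F (Suc m))
     + (q^2+q) * fps_nth F m - (q*c+a) * fps_nth F (Suc m) = 0"
    by (simp del: of_nat_Suc)
  then show ?thesis by (simp add: algebra_simps)
qed

lemma w01:
  fixes a c q :: complex
  assumes "\<forall>k::nat. c \<noteq> - of_nat k"
  defines "F \<equiv> fps_exp q * Abs_fps (mc a c)"
  shows "fps_nth F 0 = 1" "fps_nth F (Suc 0) = a / c + q"
  using poch_nz[OF assms(1), of 1]
  by (simp_all add: F_def fps_mult_nth mc_def)


lemma Dnz:
  assumes "\<forall>k::nat. c \<noteq> - of_nat k"
  shows "of_nat (Suc (Suc m)) * (c + of_nat (Suc m)) \<noteq> (0::complex)"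
  using cn_nz[OF assms, of "Suc m"] by (simp del: of_nat_Suc)

lemma solve3:
  fixes D X Y w0 w1 w2 :: complex
  assumes "D \<noteq> 0" "D * w2 = X * w1 - Y * w0"
  shows "w2 = X / D * w1 - Y / D * w0"
  using assms by (simp add: field_simps)

lemma useq:
  assumes "\<forall>k::nat. c \<noteq> - of_nat k"
  shows "u_seq a c p n = fps_nth (fps_exp (\<i>*p) * Abs_fps (mc a c)) n"
proof (induction n rule: less_induct)
  case (less n)
  let ?F = "fps_exp (\<i>*p) * Abs_fps (mc a c)"
  show ?case
  proof (cases n)
    case 0 then show ?thesis using w01[OF assms] by simp
  next
    case (Suc k)
    show ?thesis
    proof (cases k)
      case 0 then show ?thesis using Suc w01[OF assms] by simp
    next
      case (Suc m)
      note r = wrec[OF assms, of m "\<i>*p" a]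
      note d = Dnz[OF assms, of m]
      have i1: "u_seq a c p (Suc m) = fps_nth ?F (Suc m)" using less Suc \<open>n = Suc k\<close> by simp
      have i0: "u_seq a c p m = fps_nth ?F m" using less Suc \<open>n = Suc k\<close> by simp
      have qq: "(\<i>*p)^2 + \<i>*p = \<i> * p - p^2" by (simp add: power_mult_distrib)
      show ?thesis unfolding \<open>n = Suc k\<close> Suc u_seq.simps(3) i1 i0
        using solve3[OF d r] unfolding qq by (simp add: algebra_simps)
    qed
  qed
qed

lemma vseq:
  assumes "\<forall>k::nat. c \<noteq> - of_nat k"
  shows "v_seq a c p n = fps_nth (fps_exp (-(\<i>*p)) * Abs_fps (mc a c)) n"
proof (induction n rule: less_induct)
  case (less n)
  let ?F = "fps_exp (-(\<i>*p)) * Abs_fps (mc a c)"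
  show ?case
  proof (cases n)
    case 0 then show ?thesis using w01[OF assms] by simp
  next
    case (Suc k)
    show ?thesis
    proof (cases k)
      case 0 then show ?thesis using Suc w01[OF assms] by simp
    next
      case (Suc m)
      note r = wrec[OF assms, of m "-(\<i>*p)" a]
      note d = Dnz[OF assms, of m]
      have i1: "v_seq a c p (Suc m) = fps_nth ?F (Suc m)" using less Suc \<open>n = Suc k\<close> by simp
      have i0: "v_seq a c p m = fps_nth ?F m" using less Suc \<open>n = Suc k\<close> by simp
      have qq: "(-(\<i>*p))^2 + -(\<i>*p) = -(\<i> * p + p^2)" by (simp add: power_mult_distrib)
      show ?thesis unfolding \<open>n = Suc k\<close> Suc v_seq.simps(3) i1 i0
        using solve3[OF d r] unfolding qq
        by (simp only: minus_divide_left[symmetric] mult_minus_left mult_minus_right diff_minus_eq_add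
             diff_conv_add_uminus minus_minus)
    qed
  qed
qed

lemma msum:
  fixes a c z :: complex
  assumes "\<forall>k::nat. c \<noteq> - of_nat k"
  shows "summable (\<lambda>n. norm (mc a c n * z^n))"
proof (rule summable_ratio_test[where c="1/2" and N="nat \<lceil>2*norm c + norm a + 8*norm z\<rceil> + 1"])
  fix n assume nN: "nat \<lceil>2*norm c + norm a + 8*norm z\<rceil> + 1 \<le> n"
  define A where "A = norm (mc a c n)"
  define B where "B = norm (mc a c (Suc n))"
  have n1: "real n \<ge> 2*norm c + norm a + 8*norm z + 1" using nN by linarith
  have A0: "A \<ge> 0" "B \<ge> 0" unfolding A_def B_def by auto
  have nn: "cmod (complex_of_nat n + 1) = real n + 1"
    by (metis of_nat_Suc norm_of_nat add.commute of_nat_1 of_nat_add)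
  have eq: "(real n + 1) * norm (c + of_nat n) * B = norm (a + of_nat n) * A"
    using nn arg_cong[OF mrec[OF assms, of n a], of norm] unfolding A_def B_def
    by (simp add: norm_mult)
  have h1: "norm (c + of_nat n) \<ge> real n / 2"
  proof -
    have nnn: "cmod (of_nat n) = real n" by simp
    have "norm (of_nat n :: complex) \<le> norm (c + of_nat n) + norm c"
      using norm_triangle_ineq4[of "c + of_nat n" c] by simp
    then show ?thesis using n1 norm_ge_zero[of a] norm_ge_zero[of z] nnn by linarith
  qed
  have h2: "norm (a + of_nat n) \<le> 2 * real n"
  proof -
    have "cmod (a + of_nat n) \<le> cmod a + real n"
      using norm_triangle_ineq[of a "of_nat n"] by simp
    then show ?thesis using n1 norm_ge_zero[of c] norm_ge_zero[of z] by linarith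
  qed
  have "(real n + 1) * (real n / 2) * B \<le> (real n + 1) * norm (c + of_nat n) * B"
    by (intro mult_right_mono mult_left_mono h1 A0) auto
  also have "\<dots> \<le> 2 * real n * A" unfolding eq by (intro mult_right_mono h2 A0)
  finally have "(real n + 1) * (real n / 2) * B \<le> 2 * real n * A" .
  then have "real n * ((real n + 1) * B) \<le> real n * (4 * A)" by (simp add: algebra_simps)
  then have h3: "(real n + 1) * B \<le> 4 * A" using n1
    by (smt (verit) mult_le_cancel_left_pos norm_ge_zero)
  have "(real n + 1) * (B * norm z) \<le> 4 * A * norm z"
    using mult_right_mono[OF h3 norm_ge_zero[of z]] by (simp add: algebra_simps)
  also have "\<dots> \<le> (real n + 1) * (A / 2)"
  proof -
    have "8 * norm z \<le> real n + 1" using n1 norm_ge_zero[of c] norm_ge_zero[of a] by linarith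
    from mult_right_mono[OF this A0(1)] show ?thesis by (simp add: algebra_simps)
  qed
  finally have Bz: "B * norm z \<le> A / 2"
    by (smt (verit) mult_le_cancel_left_pos of_nat_0_le_iff)
  then show "norm (norm (mc a c (Suc n) * z ^ Suc n)) \<le> 1 / 2 * norm (norm (mc a c n * z ^ n))"
    using mult_right_mono[OF Bz, of "norm z ^ n"] unfolding A_def B_def
    by (simp add: norm_mult norm_power algebra_simps)
qed simp

lemma wsums:
  fixes a c q z :: complex
  assumes "\<forall>k::nat. c \<noteq> - of_nat k"
  shows "(\<lambda>n. fps_nth (fps_exp q * Abs_fps (mc a c)) n * z^n) sums (exp (q*z) * kummerM a c z)"
proof -
  define f where "f = (\<lambda>i. (q*z)^i /\<^sub>R fact i)"
  define g where "g = (\<lambda>j. mc a c j * z^j)"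
  have sf: "summable (\<lambda>k. norm (f k))" unfolding f_def by (rule summable_norm_exp)
  have sg: "summable (\<lambda>k. norm (g k))" unfolding g_def by (rule msum[OF assms])
  have ef: "suminf f = exp (q*z)" unfolding f_def using exp_converges sums_unique by metis
  have eg: "suminf g = kummerM a c z" unfolding g_def kummerM_def mc_def by simp
  have co: "(\<Sum>i\<le>k. f i * g (k - i)) = fps_nth (fps_exp q * Abs_fps (mc a c)) k * z^k" for k
  proof -
    have "(\<Sum>i\<le>k. f i * g (k - i)) = (\<Sum>i\<le>k. q^i / of_nat (fact i) * mc a c (k - i) * z^k)"
    proof (rule sum.cong[OF refl])
      fix i assume "i \<in> {..k}"
      then have "z^k = z^i * z^(k-i)" by (simp add: power_add[symmetric])
      then show "f i * g (k - i) = q^i / of_nat (fact i) * mc a c (k - i) * z^k"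
        unfolding f_def g_def by (simp add: scaleR_conv_of_real power_mult_distrib field_simps)
    qed
    also have "\<dots> = fps_nth (fps_exp q * Abs_fps (mc a c)) k * z^k"
      by (simp add: fps_mult_nth atMost_atLeast0 sum_distrib_right)
    finally show ?thesis .
  qed
  show ?thesis using Cauchy_product_sums[OF sf sg] unfolding co ef eg .
qed

theorem theorem2p4:
  fixes a c p z :: complex
  assumes "\<forall>k::nat. c \<noteq> - of_nat k"
  shows "(\<lambda>n. (u_seq a c p n - v_seq a c p n) / (2 * \<i>) * z ^ n) sums (sin (p * z) * kummerM a c z)"
proof -
  note s1 = wsums[OF assms, of "\<i>*p" a z]
  note s2 = wsums[OF assms, of "-(\<i>*p)" a z]
  have "(\<lambda>n. (fps_nth (fps_exp (\<i>*p) * Abs_fps (mc a c)) n * z^n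
        - fps_nth (fps_exp (-(\<i>*p)) * Abs_fps (mc a c)) n * z^n) / (2*\<i>)) sums
        ((exp (\<i>*p*z) * kummerM a c z - exp (-(\<i>*p)*z) * kummerM a c z) / (2*\<i>))"
    by (intro sums_divide sums_diff s1 s2)
  moreover have "(exp (\<i>*p*z) * kummerM a c z - exp (-(\<i>*p)*z) * kummerM a c z) / (2*\<i>)
      = sin (p * z) * kummerM a c z"
    unfolding sin_exp_eq[of "p*z"] by (simp add: algebra_simps diff_divide_distrib)
  ultimately show ?thesis
    unfolding useq[OF assms, symmetric] vseq[OF assms, symmetric]
    by (simp add: algebra_simps diff_divide_distrib)
qed

end
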